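(* For $m\in\mathbb{N}$ let $A_m,B_m\in\mathbb{R}^{m\times m}$ be given by $(A_m)_{ij}=1$ if $|i-j|=1$ and $0$ otherwise, and $(B_m)_{ij}=1$ if $j=i+1$, $(B_m)_{ij}=-1$ if $j=i-1$, and $0$ otherwise. Let $e_1,e_m$ be the first and last standard basis vectors of $\mathbb{R}^m$ and set \[ \tilde A=A_m+e_1e_1^T-e_me_m^T,\quad \tilde B=B_m+e_1e_1^T+e_me_m^T,\quad \hat A=-A_m+e_1e_1^T-e_me_m^T. \] For real $c\ge 0$ let \[ \tilde H_c(m)=\begin{bmatrix}\tilde A+2cI & \tilde B\\ \tilde B^T & \hat A-2cI\end{bmatrix}\in\mathbb{R}^{2m\times 2m}. \] Then for all $m\in\mathbb{N}$ and $c\ge 0$ the eigenvalues of $\tilde H_c(m)$ come in plus/minus pairs (counting multiplicity), and $(-2|c-1|,2|c-1|)\cap\sigma(\tilde H_c(m))=\emptyset$. Moreover, $(-2|c-1|,2|c-1|)$ is the largest interval with this property: for every $\epsilon>0$ there is $m$ such that $(-2|c-1|-\epsilon,2|c-1|+\epsilon)\cap\sigma(\tilde H_c(m))\neq\emptyset$.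
   Context: $\sigma$ denotes the spectrum. *)

theory Defs
  imports "Jordan_Normal_Form.Char_Poly"
begin

text \<open>Matrices are 0-indexed in Jordan_Normal_Form: index i here corresponds to i+1 in the paper.\<close>

definition A_mat :: "nat \<Rightarrow> real mat" where
  "A_mat m = mat m m (\<lambda>(i,j). if i = j + 1 \<or> j = i + 1 then 1 else 0)"

definition B_mat :: "nat \<Rightarrow> real mat" where
  "B_mat m = mat m m (\<lambda>(i,j). if j = i + 1 then 1 else if i = j + 1 then -1 else 0)"

definition E_first :: "nat \<Rightarrow> real mat" where
  "E_first m = mat m m (\<lambda>(i,j). if i = 0 \<and> j = 0 then 1 else 0)"

definition E_last :: "nat \<Rightarrow> real mat" where
  "E_last m = mat m m (\<lambda>(i,j). if i = m - 1 \<and> j = m - 1 then 1 else 0)"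

definition A_tilde :: "nat \<Rightarrow> real mat" where
  "A_tilde m = A_mat m + E_first m - E_last m"

definition B_tilde :: "nat \<Rightarrow> real mat" where
  "B_tilde m = B_mat m + E_first m + E_last m"

definition A_hat :: "nat \<Rightarrow> real mat" where
  "A_hat m = - A_mat m + E_first m - E_last m"

definition H_tilde :: "real \<Rightarrow> nat \<Rightarrow> real mat" where
  "H_tilde c m = four_block_mat
     (A_tilde m + (2 * c) \<cdot>\<^sub>m 1\<^sub>m m) (B_tilde m)
     (transpose_mat (B_tilde m)) (A_hat m - (2 * c) \<cdot>\<^sub>m 1\<^sub>m m)"

text \<open>Spectrum of a real square matrix (its real eigenvalues; H_tilde is symmetric).\<close>
definition spec :: "real mat \<Rightarrow> real set" where
  "spec M = {l. eigenvalue M l}"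

end

theory Submission
  imports Defs
begin


lemma sum_delta_cond: shows "(\<Sum>j<(n::nat). (if P \<and> j = t then w else 0) * (g j::real)) = (if P \<and> t < n then w * g t else 0)" (is "_ = ?r")
proof -
  have "(\<Sum>j<n. (if P \<and> j = t then w else 0) * (g j::real)) = (\<Sum>j<n. if j = t then (if P then w * g t else 0) else 0)"
    by (rule sum.cong) auto
  also have "\<dots> = ?r" by simp
  finally show ?thesis .
qed

lemma mat_mult_vec_idx: assumes "a \<in> carrier_vec m" "i < n"
  shows "(mat n m f *\<^sub>v a) $ i = (\<Sum>j<m. f (i,j) * a $ j)"
  using assms by (simp add: scalar_prod_def lessThan_atLeast0 carrier_vecD)

lemma A_mat_vec: assumes "a \<in> carrier_vec m" "i < m"
  shows "(A_mat m *\<^sub>v a) $ i = (if 0 < i then a $ (i-1) else 0) + (if i+1 < m then a $ (i+1) else 0)" (is "_ = ?r")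
proof -
  have "(A_mat m *\<^sub>v a) $ i = (\<Sum>j<m. ((if 0<i \<and> j = i-1 then 1 else 0) + (if True \<and> j = i+1 then 1 else 0)) * a $ j)"
    unfolding A_mat_def mat_mult_vec_idx[OF assms] by (rule sum.cong) auto
  also have "\<dots> = ?r" unfolding distrib_right sum.distrib sum_delta_cond using assms by auto
  finally show ?thesis .
qed


lemma H_entry:
  assumes "i < 2*m" "j < 2*m"
  shows "H_tilde c m $$ (i,j) =
    (if i < m then
      if j < m then (if i = j+1 \<or> j = i+1 then 1 else 0) + (if i = 0 \<and> j = 0 then 1 else 0) - (if i = m-1 \<and> j = m-1 then 1 else 0) + (if i = j then 2*c else 0)
      else (if j-m = i+1 then 1 else if i = j-m+1 then -1 else 0) + (if i = 0 \<and> j-m = 0 then 1 else 0) + (if i = m-1 \<and> j-m = m-1 then 1 else 0)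
     else
      if j < m then (if i-m = j+1 then 1 else if j = i-m+1 then -1 else 0) + (if j = 0 \<and> i-m = 0 then 1 else 0) + (if j = m-1 \<and> i-m = m-1 then 1 else 0)
      else - (if i-m = j-m+1 \<or> j-m = i-m+1 then 1 else 0) + (if i-m = 0 \<and> j-m = 0 then 1 else 0) - (if i-m = m-1 \<and> j-m = m-1 then 1 else 0) - (if i-m = j-m then 2*c else 0))"
  using assms
  unfolding H_tilde_def A_tilde_def A_hat_def B_tilde_def A_mat_def B_mat_def E_first_def E_last_def
  by (simp add: index_mat_four_block)


lemma sum_split_add: "(\<Sum>j<m+n. f j) = (\<Sum>j<(m::nat). f j) + (\<Sum>j<n. (f (m+j)::real))"
  by (induction n) (auto simp: add.assoc)

lemma r1: "(if k = j+1 \<or> j = k+1 then 1 else 0) = (if 0<k \<and> j=k-1 then 1 else (0::real)) + (if True \<and> j=k+1 then 1 else 0)"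
  for k j :: nat by (auto split: if_split; arith)
lemma r2: "(if j = k+1 then 1 else if k = j+1 then -1 else (0::real)) = (if True \<and> j=k+1 then 1 else 0) + (if 0<k \<and> j=k-1 then -1 else 0)"
  for k j :: nat by (auto split: if_split; arith)
lemma r4: "(if k = j+1 then 1 else if j = k+1 then -1 else (0::real)) = (if 0<k \<and> j=k-1 then 1 else 0) + (if True \<and> j=k+1 then -1 else 0)"
  for k j :: nat by (auto split: if_split; arith)

lemma H_TL: assumes "k < m" "j < m"
  shows "H_tilde c m $$ (k,j) = (if k = j+1 \<or> j = k+1 then 1 else 0) + (if k=0 \<and> j=0 then 1 else 0) - (if k=m-1 \<and> j=m-1 then 1 else 0) + (if k = j then 2*c else 0)"
  using assms by (subst H_entry) auto


lemma H_carrier: "H_tilde c m \<in> carrier_mat (2*m) (2*m)"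
  unfolding H_tilde_def A_tilde_def A_hat_def B_tilde_def A_mat_def B_mat_def E_first_def E_last_def mult_2
  by (rule four_block_carrier_mat) auto

lemma H_row: assumes x: "x \<in> carrier_vec (2*m)" and k: "k < 2*m"
  shows "(H_tilde c m *\<^sub>v x) $ k = (\<Sum>j<m. H_tilde c m $$ (k,j) * x$j) + (\<Sum>j<m. H_tilde c m $$ (k,m+j) * x$(m+j))"
proof -
  have d: "dim_row (H_tilde c m) = 2*m" "dim_col (H_tilde c m) = 2*m" using H_carrier by auto
  have "(H_tilde c m *\<^sub>v x) $ k = (\<Sum>j<m+m. H_tilde c m $$ (k,j) * x$j)"
    using x k d by (simp add: scalar_prod_def lessThan_atLeast0 carrier_vecD mult_2 row_def)
  then show ?thesis by (simp add: sum_split_add)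
qed
lemma H_TR: assumes "k < m" "j < m"
  shows "H_tilde c m $$ (k,m+j) = (if j = k+1 then 1 else if k = j+1 then -1 else 0) + (if k=0 \<and> j=0 then 1 else 0) + (if k=m-1 \<and> j=m-1 then 1 else 0)"
  using assms by (subst H_entry) auto
lemma r3: "(if k = j then w else 0) = (if True \<and> j = k then w else (0::real))" for k j :: nat by auto
lemma H_BL: assumes "k < m" "j < m"
  shows "H_tilde c m $$ (m+k,j) = (if k = j+1 then 1 else if j = k+1 then -1 else 0) + (if k=0 \<and> j=0 then 1 else 0) + (if k=m-1 \<and> j=m-1 then 1 else 0)"
  using assms by (subst H_entry) auto
lemma H_BR: assumes "k < m" "j < m"
  shows "H_tilde c m $$ (m+k,m+j) = - (if k = j+1 \<or> j = k+1 then 1 else 0) + (if k=0 \<and> j=0 then 1 else 0) - (if k=m-1 \<and> j=m-1 then 1 else 0) - (if k = j then 2*c else 0)"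
  using assms by (subst H_entry) auto

lemmas sumsimps = distrib_right left_diff_distrib sum.distrib sum_subtractf sum_negf mult_minus_left sum_delta_cond

lemma Hv_top: assumes x: "x \<in> carrier_vec (2*m)" and k: "k < m"
  shows "(H_tilde c m *\<^sub>v x) $ k = (if 0<k then x$(k-1) - x$(m+(k-1)) else x$0 + x$m)
     + (if k+1<m then x$(k+1) + x$(m+(k+1)) else x$(m+(m-1)) - x$(m-1)) + 2*c*x$k" (is "_ = ?r")
proof -
  have "(H_tilde c m *\<^sub>v x) $ k = (\<Sum>j<m. ((if k = j+1 \<or> j = k+1 then 1 else 0) + (if k=0 \<and> j=0 then 1 else 0) - (if k=m-1 \<and> j=m-1 then 1 else 0) + (if k = j then 2*c else 0)) * x$j)
     + (\<Sum>j<m. ((if j = k+1 then 1 else if k = j+1 then -1 else 0) + (if k=0 \<and> j=0 then 1 else 0) + (if k=m-1 \<and> j=m-1 then 1 else 0)) * x$(m+j))"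
    using x k by (simp add: H_row H_TL H_TR)
  also have "\<dots> = (if 0<k \<and> k-1<m then 1 * x$(k-1) else 0) + (if True \<and> k+1<m then 1 * x$(k+1) else 0)
     + (if k=0 \<and> 0<m then 1 * x$0 else 0) - (if k=m-1 \<and> m-1<m then 1 * x$(m-1) else 0) + (if True \<and> k < m then 2*c*x$k else 0)
     + ((if True \<and> k+1<m then 1 * x$(m+(k+1)) else 0) + (if 0<k \<and> k-1<m then -1 * x$(m+(k-1)) else 0) 
     + (if k=0 \<and> 0<m then 1 * x$(m+0) else 0) + (if k=m-1 \<and> m-1<m then 1 * x$(m+(m-1)) else 0))"
    apply (simp only: r1 r2)
    apply (simp only: r3)
    apply (simp only: sumsimps)
    done
  also have "\<dots> = ?r" using k by (cases "m = Suc 0") auto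
  finally show ?thesis .
qed

lemma Hv_bot: assumes x: "x \<in> carrier_vec (2*m)" and k: "k < m"
  shows "(H_tilde c m *\<^sub>v x) $ (m+k) = (if 0<k then x$(k-1) - x$(m+(k-1)) else x$0 + x$m)
     - (if k+1<m then x$(k+1) + x$(m+(k+1)) else x$(m+(m-1)) - x$(m-1)) - 2*c*x$(m+k)" (is "_ = ?r")
proof -
  have "(H_tilde c m *\<^sub>v x) $ (m+k) = (\<Sum>j<m. ((if k = j+1 then 1 else if j = k+1 then -1 else 0) + (if k=0 \<and> j=0 then 1 else 0) + (if k=m-1 \<and> j=m-1 then 1 else 0)) * x$j)
     + (\<Sum>j<m. (- (if k = j+1 \<or> j = k+1 then 1 else 0) + (if k=0 \<and> j=0 then 1 else 0) - (if k=m-1 \<and> j=m-1 then 1 else 0) - (if k = j then 2*c else 0)) * x$(m+j))"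
    using x k by (simp add: H_row H_BL H_BR)
  also have "\<dots> = ?r"
    apply (simp only: r1 r4)
    apply (simp only: r3)
    apply (simp only: sumsimps)
    using k by (cases "m = Suc 0") auto
  finally show ?thesis .
qed


lemma ab_eqs:
  assumes x: "x \<in> carrier_vec (2*m)" and ev: "H_tilde c m *\<^sub>v x = l \<cdot>\<^sub>v x" and k: "k < m"
  defines "a \<equiv> \<lambda>i. x$i + x$(m+i)" and "b \<equiv> \<lambda>i. x$i - x$(m+i)"
  shows "l * a k = 2 * ((if 0<k then b (k-1) else a 0) + c * b k)"
    and "l * b k = 2 * ((if k+1<m then a (k+1) else - b (m-1)) + c * a k)"
proof -
  have d: "dim_vec x = 2*m" using x by auto
  have e1: "(H_tilde c m *\<^sub>v x) $ k = l * x$k" unfolding ev using d k by simp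
  have e2: "(H_tilde c m *\<^sub>v x) $ (m+k) = l * x$(m+k)" unfolding ev using d k by simp
  note t = Hv_top[OF x k, of c] and bo = Hv_bot[OF x k, of c]
  show "l * a k = 2 * ((if 0<k then b (k-1) else a 0) + c * b k)"
    using e1 e2 t bo unfolding a_def b_def by (auto simp: algebra_simps)
  show "l * b k = 2 * ((if k+1<m then a (k+1) else - b (m-1)) + c * a k)"
    using e1 e2 t bo unfolding a_def b_def by (auto simp: algebra_simps)
qed

lemma sq_lower: "(c::real) \<ge> 0 \<Longrightarrow> (p + c*q)^2 \<ge> p^2 + c^2*q^2 - c*(p^2+q^2)"
proof -
  assume c: "c \<ge> 0"
  have "(p + c*q)^2 - (p^2 + c^2*q^2 - c*(p^2+q^2)) = c*(p+q)^2" by (simp add: power2_eq_square algebra_simps)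
  moreover have "c*(p+q)^2 \<ge> 0" using c by simp
  ultimately show ?thesis by linarith
qed

lemma gap:
  assumes c: "c \<ge> 0" and x: "x \<in> carrier_vec (2*m)" and x0: "x \<noteq> 0\<^sub>v (2*m)" and ev: "H_tilde c m *\<^sub>v x = l \<cdot>\<^sub>v x"
  shows "2 * \<bar>c - 1\<bar> \<le> \<bar>l\<bar>"
proof -
  define a where "a = (\<lambda>i. x$i + x$(m+i))"
  define b where "b = (\<lambda>i. x$i - x$(m+i))"
  define P where "P = (\<lambda>k. if 0<k then b (k-1) else a 0)"
  define Q where "Q = (\<lambda>k. if k+1<m then a (k+1) else - b (m-1))"
  define N where "N = (\<Sum>k<m. (a k)^2 + (b k)^2)"
  have la: "l * a k = 2 * (P k + c * b k)" and lb: "l * b k = 2 * (Q k + c * a k)" if "k < m" for k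
    using ab_eqs[OF x ev that] unfolding a_def b_def P_def Q_def by auto
  have d: "dim_vec x = 2*m" using x by auto
  obtain i where i: "i < 2*m" "x$i \<noteq> 0" using x0 d by (metis eq_vecI index_zero_vec(1) index_zero_vec(2))
  have m0: "m > 0" using i by auto
  then obtain n where mn: "m = Suc n" using gr0_implies_Suc by blast
  have Npos: "N > 0"
  proof -
    obtain k where k: "k < m" and ab: "a k \<noteq> 0 \<or> b k \<noteq> 0"
    proof (cases "i < m")
      case True
      then show ?thesis using that[of i] i unfolding a_def b_def by force
    next
      case False
      then show ?thesis using that[of "i-m"] i unfolding a_def b_def by force
    qed
    have "(a k)^2 + (b k)^2 > 0" using ab by (simp add: add_pos_nonneg sum_power2_gt_zero_iff)
    moreover have "(a k)^2 + (b k)^2 \<le> N" unfolding N_def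
      by (rule member_le_sum) (use k in auto)
    ultimately show ?thesis by linarith
  qed
  have PQ: "(\<Sum>k<m. (P k)^2 + (Q k)^2) = N"
  proof -
    have "(\<Sum>k<m. (P k)^2) = (a 0)^2 + (\<Sum>k<n. (b k)^2)"
      unfolding mn sum.lessThan_Suc_shift P_def by simp
    moreover have "(\<Sum>k<m. (Q k)^2) = (\<Sum>k<n. (a (Suc k))^2) + (b n)^2"
      unfolding mn sum.lessThan_Suc Q_def by (simp add: mn)
    moreover have "N = (a 0)^2 + (\<Sum>k<n. (a (Suc k))^2) + ((\<Sum>k<n. (b k)^2) + (b n)^2)"
    proof -
      have "(\<Sum>k<Suc n. (a k)^2) = (a 0)^2 + (\<Sum>k<n. (a (Suc k))^2)" by (rule sum.lessThan_Suc_shift)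
      moreover have "(\<Sum>k<Suc n. (b k)^2) = (\<Sum>k<n. (b k)^2) + (b n)^2" by simp
      ultimately show ?thesis unfolding N_def sum.distrib mn by simp
    qed
    ultimately show ?thesis by (simp add: sum.distrib)
  qed
  have "l^2 * N = (\<Sum>k<m. (l * a k)^2 + (l * b k)^2)"
    unfolding N_def sum_distrib_left by (simp add: power_mult_distrib algebra_simps)
  also have "\<dots> = 4 * (\<Sum>k<m. (P k + c * b k)^2 + (Q k + c * a k)^2)"
    unfolding sum_distrib_left by (rule sum.cong) (auto simp: la lb power2_eq_square algebra_simps)
  also have "\<dots> \<ge> 4 * (\<Sum>k<m. ((P k)^2 + (Q k)^2) + c^2 * ((a k)^2 + (b k)^2) - c * (((P k)^2 + (Q k)^2) + ((a k)^2 + (b k)^2)))"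
  proof -
    have "(\<Sum>k<m. ((P k)^2 + (Q k)^2) + c^2 * ((a k)^2 + (b k)^2) - c * (((P k)^2 + (Q k)^2) + ((a k)^2 + (b k)^2)))
       \<le> (\<Sum>k<m. (P k + c * b k)^2 + (Q k + c * a k)^2)"
    proof (rule sum_mono)
      fix k
      have "(P k + c * b k)^2 \<ge> (P k)^2 + c^2 * (b k)^2 - c * ((P k)^2 + (b k)^2)" by (rule sq_lower[OF c])
      moreover have "(Q k + c * a k)^2 \<ge> (Q k)^2 + c^2 * (a k)^2 - c * ((Q k)^2 + (a k)^2)" by (rule sq_lower[OF c])
      ultimately show "((P k)^2 + (Q k)^2) + c^2 * ((a k)^2 + (b k)^2) - c * (((P k)^2 + (Q k)^2) + ((a k)^2 + (b k)^2))
        \<le> (P k + c * b k)^2 + (Q k + c * a k)^2" by (simp add: algebra_simps)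
    qed
    then show ?thesis by simp
  qed
  finally have "4 * (\<Sum>k<m. ((P k)^2 + (Q k)^2) + c^2 * ((a k)^2 + (b k)^2) - c * (((P k)^2 + (Q k)^2) + ((a k)^2 + (b k)^2))) \<le> l^2 * N" .
  also have "(\<Sum>k<m. ((P k)^2 + (Q k)^2) + c^2 * ((a k)^2 + (b k)^2) - c * (((P k)^2 + (Q k)^2) + ((a k)^2 + (b k)^2)))
     = N + c^2 * N - c * (N + N)"
  proof -
    have PQ': "(\<Sum>k<m. (P k)^2) + (\<Sum>k<m. (Q k)^2) = (\<Sum>k<m. (a k)^2) + (\<Sum>k<m. (b k)^2)"
      using PQ unfolding N_def sum.distrib .
    show ?thesis unfolding sum.distrib sum_subtractf sum_distrib_left[symmetric] N_def using PQ' by (simp add: algebra_simps)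
  qed
  finally have "4 * ((1 - c)^2 * N) \<le> l^2 * N" by (simp add: power2_eq_square algebra_simps)
  hence "4 * (1 - c)^2 \<le> l^2" using Npos by (simp add: mult.assoc[symmetric])
  hence "(2 * \<bar>c - 1\<bar>)^2 \<le> \<bar>l\<bar>^2" by (simp add: power_mult_distrib power2_abs power2_commute)
  thus ?thesis by (rule power2_le_imp_le) simp
qed


lemma eig_construct:
  assumes c: "c > 0" and m: "m > 0"
  defines "t \<equiv> pi / (2 * real m)"
  defines "\<phi> \<equiv> pi - t"
  defines "\<mu> \<equiv> sqrt (1 + c^2 + 2*c*cos \<phi>)"
  shows "eigenvalue (H_tilde c m) (2*\<mu>)"
proof -
  have t0: "0 < t" and tpi: "t < pi" using m unfolding t_def by (auto simp: field_simps)
  have sphi: "sin \<phi> > 0" unfolding \<phi>_def using sin_gt_zero[OF t0 tpi] by simp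
  have cm: "cos (\<phi> * real m) = 0"
  proof -
    have "\<phi> * real m = real m * pi - pi/2" unfolding \<phi>_def t_def using m by (simp add: field_simps)
    then show ?thesis by (simp add: cos_diff)
  qed
  have rad: "1 + c^2 + 2*c*cos \<phi> = (c + cos \<phi>)^2 + (sin \<phi>)^2"
    by (simp add: power2_eq_square algebra_simps)
  have radpos: "1 + c^2 + 2*c*cos \<phi> > 0" unfolding rad using sphi by (simp add: add_nonneg_pos)
  have mu2: "\<mu>^2 = 1 + c^2 + 2*c*cos \<phi>" unfolding \<mu>_def using radpos by simp
  have mupos: "\<mu> > 0" unfolding \<mu>_def using radpos by simp
  define p where "p = c * sin \<phi>"
  define q where "q = \<mu> - 1 - c * cos \<phi>"
  define B where "B = (\<lambda>j::nat. p * cos (\<phi> * real j) + q * sin (\<phi> * real j))"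
  define \<alpha> where "\<alpha> = (\<lambda>k. B k + c * B (k+1))"
  define \<beta> where "\<beta> = (\<lambda>k. \<mu> * B (k+1))"
  define x where "x = vec (2*m) (\<lambda>i. if i < m then \<alpha> i + \<beta> i else \<alpha> (i-m) - \<beta> (i-m))"
  have rec: "B k + B (k+2) = 2 * cos \<phi> * B (k+1)" for k
  proof -
    have e1: "\<phi> * real k = \<phi> * real (k+1) - \<phi>" by (simp add: algebra_simps)
    have e2: "\<phi> * real (k+2) = \<phi> * real (k+1) + \<phi>" by (simp add: algebra_simps)
    show ?thesis unfolding B_def e1 e2 cos_diff sin_diff cos_add sin_add by (simp add: algebra_simps)
  qed
  have B0: "B 0 = p" unfolding B_def by simp
  have B1: "B (Suc 0) = (\<mu> - 1) * sin \<phi>" unfolding B_def p_def q_def by (simp add: algebra_simps)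
  obtain n where mn: "m = Suc n" using m gr0_implies_Suc by blast
  define s where "s = sin (\<phi> * real m)"
  have Bm: "B m = q * s" unfolding B_def s_def using cm by simp
  have Bm1: "B n = s * (p * sin \<phi> + q * cos \<phi>)"
  proof -
    have e: "\<phi> * real n = \<phi> * real m - \<phi>" unfolding mn by (simp add: algebra_simps)
    show ?thesis unfolding B_def e cos_diff sin_diff cm s_def by (simp add: algebra_simps)
  qed
  have E1: "(if 0<k then \<beta> (k-1) else \<alpha> 0) + c * \<beta> k = \<mu> * \<alpha> k" for k
  proof (cases "k = 0")
    case True
    have "\<alpha> 0 + c * \<beta> 0 = \<mu> * \<alpha> 0" unfolding \<alpha>_def \<beta>_def by (simp add: B0 B1 p_def algebra_simps)
    then show ?thesis using True by simp
  next
    case False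
    then show ?thesis unfolding \<alpha>_def \<beta>_def by (simp add: algebra_simps)
  qed
  have E2: "(if k+1<m then \<alpha> (k+1) else - \<beta> (m-1)) + c * \<alpha> k = \<mu> * \<beta> k" if k: "k < m" for k
  proof (cases "k+1 < m")
    case True
    have "\<alpha> (k+1) + c * \<alpha> k = B (k+1) + c * (B k + B (k+2)) + c^2 * B (k+1)"
      unfolding \<alpha>_def by (simp add: algebra_simps power2_eq_square)
    also have "\<dots> = \<mu>^2 * B (k+1)" unfolding rec mu2 by (simp add: algebra_simps)
    finally show ?thesis using True unfolding \<beta>_def by (simp add: power2_eq_square)
  next
    case False
    then have kn: "k = n" using k mn by simp
    have sc: "(sin \<phi>)^2 + (cos \<phi>)^2 = 1" by simp
    have "- \<beta> n + c * \<alpha> n = \<mu> * \<beta> n"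
    proof -
      have Bm': "B (n+1) = q * s" using Bm mn by simp
      have sc2: "sin \<phi> * sin \<phi> = 1 - cos \<phi> * cos \<phi>" using sc by (simp add: power2_eq_square)
      have "- \<beta> n + c * \<alpha> n - \<mu> * \<beta> n = - s*(q+1)*(\<mu>^2 - 1 - c^2 - 2*c*cos \<phi>)"
        unfolding \<alpha>_def \<beta>_def Bm' Bm1 unfolding p_def q_def by (simp add: sc2 algebra_simps power2_eq_square)
      also have "\<dots> = 0" using mu2 by simp
      finally show ?thesis by simp
    qed
    then show ?thesis using False kn mn by simp
  qed
  have xc: "x \<in> carrier_vec (2*m)" unfolding x_def by simp
  have xlo: "x $ k = \<alpha> k + \<beta> k" if "k < m" for k using that unfolding x_def by simp
  have xhi: "x $ (m+k) = \<alpha> k - \<beta> k" if "k < m" for k using that unfolding x_def by simp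
  have ev: "H_tilde c m *\<^sub>v x = (2*\<mu>) \<cdot>\<^sub>v x"
  proof (rule eq_vecI)
    fix i assume "i < dim_vec ((2*\<mu>) \<cdot>\<^sub>v x)"
    hence i: "i < 2*m" unfolding x_def by simp
    show "(H_tilde c m *\<^sub>v x) $ i = ((2*\<mu>) \<cdot>\<^sub>v x) $ i"
    proof (cases "i < m")
      case True
      have P: "(if 0<i then x$(i-1) - x$(m+(i-1)) else x$0 + x$m) = 2 * (if 0<i then \<beta> (i-1) else \<alpha> 0)"
        using True m xlo[of "i-1"] xhi[of "i-1"] xlo[of 0] xhi[of 0] by auto
      have Q: "(if i+1<m then x$(i+1) + x$(m+(i+1)) else x$(m+(m-1)) - x$(m-1)) = 2 * (if i+1<m then \<alpha> (i+1) else - \<beta> (m-1))"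
        using True m xlo[of "i+1"] xhi[of "i+1"] xlo[of "m-1"] xhi[of "m-1"] by auto
      show ?thesis unfolding Hv_top[OF xc True] P Q using E1[of i] E2[OF True] True i xlo[OF True]
        by (simp add: x_def algebra_simps)
    next
      case False
      define k where "k = i - m"
      have k: "k < m" and ik: "i = m + k" using i False unfolding k_def by auto
      have P: "(if 0<k then x$(k-1) - x$(m+(k-1)) else x$0 + x$m) = 2 * (if 0<k then \<beta> (k-1) else \<alpha> 0)"
        using k m xlo[of "k-1"] xhi[of "k-1"] xlo[of 0] xhi[of 0] by auto
      have Q: "(if k+1<m then x$(k+1) + x$(m+(k+1)) else x$(m+(m-1)) - x$(m-1)) = 2 * (if k+1<m then \<alpha> (k+1) else - \<beta> (m-1))"
        using k m xlo[of "k+1"] xhi[of "k+1"] xlo[of "m-1"] xhi[of "m-1"] by auto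
      show ?thesis unfolding ik Hv_bot[OF xc k] P Q using E1[of k] E2[OF k] k i xhi[OF k]
        by (simp add: x_def algebra_simps)
    qed
  qed (use H_carrier[of c m] xc in auto)
  have "x $ 0 + x $ m = 2 * \<alpha> 0" using xlo[OF m] xhi[OF m] by simp
  also have "\<alpha> 0 = c * \<mu> * sin \<phi>" unfolding \<alpha>_def by (simp add: B0 B1 p_def algebra_simps)
  finally have "x $ 0 + x $ m \<noteq> 0" using c mupos sphi by simp
  hence x0: "x \<noteq> 0\<^sub>v (2*m)" using m by auto
  have "dim_row (H_tilde c m) = 2*m" using H_carrier by auto
  then show ?thesis unfolding eigenvalue_def eigenvector_def using xc x0 ev by auto
qed


lemma mat_eq_vec:
  fixes A B :: "real mat"
  assumes A: "A \<in> carrier_mat n n" and B: "B \<in> carrier_mat n n"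
    and eq: "\<And>x. x \<in> carrier_vec n \<Longrightarrow> A *\<^sub>v x = B *\<^sub>v x"
  shows "A = B"
proof (rule eq_matI)
  fix i j assume i: "i < dim_row B" and j: "j < dim_col B"
  have "A $$ (i,j) = (A *\<^sub>v unit_vec n j) $ i" using A B i j by (simp add: row_def)
  also have "\<dots> = (B *\<^sub>v unit_vec n j) $ i" using eq[of "unit_vec n j"] by simp
  also have "\<dots> = B $$ (i,j)" using A B i j by (simp add: row_def)
  finally show "A $$ (i,j) = B $$ (i,j)" .
qed (use A B in auto)

definition Jm :: "nat \<Rightarrow> real mat" where
  "Jm m = mat (2*m) (2*m) (\<lambda>(i,j). if j = 2*m-1-i then (if i<m then -1 else 1) else 0)"

lemma J_carrier: "Jm m \<in> carrier_mat (2*m) (2*m)" unfolding Jm_def by simp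

lemma J_vec: assumes y: "y \<in> carrier_vec (2*m)" and i: "i < 2*m"
  shows "(Jm m *\<^sub>v y) $ i = (if i<m then - y$(2*m-1-i) else y$(2*m-1-i))"
proof -
  have "(Jm m *\<^sub>v y) $ i = (\<Sum>j<2*m. (if True \<and> j = 2*m-1-i then (if i<m then -1 else 1) else 0) * y$j)"
    unfolding Jm_def mat_mult_vec_idx[OF y i] by simp
  also have "\<dots> = (if i<m then - y$(2*m-1-i) else y$(2*m-1-i))" unfolding sum_delta_cond using i by auto
  finally show ?thesis .
qed

lemma J_lo: assumes y: "y \<in> carrier_vec (2*m)" and j: "j < m"
  shows "(Jm m *\<^sub>v y) $ j = - y$(m+(m-1-j))"
proof -
  have e: "2*m-1-j = m+(m-1-j)" using j by arith
  show ?thesis using J_vec[OF y, of j] j unfolding e by simp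
qed

lemma J_hi: assumes y: "y \<in> carrier_vec (2*m)" and j: "j < m"
  shows "(Jm m *\<^sub>v y) $ (m+j) = y$(m-1-j)"
proof -
  have e: "2*m-1-(m+j) = m-1-j" using j by arith
  show ?thesis using J_vec[OF y, of "m+j"] j unfolding e by simp
qed


lemma JHJ: assumes x: "x \<in> carrier_vec (2*m)"
  shows "H_tilde c m *\<^sub>v (Jm m *\<^sub>v x) = - (Jm m *\<^sub>v (H_tilde c m *\<^sub>v x))"
proof -
  define y where "y = Jm m *\<^sub>v x"
  define z where "z = H_tilde c m *\<^sub>v x"
  have y: "y \<in> carrier_vec (2*m)" unfolding y_def using mult_mat_vec_carrier[OF J_carrier x] .
  have z: "z \<in> carrier_vec (2*m)" unfolding z_def using mult_mat_vec_carrier[OF H_carrier x] .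
  have ylo: "y $ j = - x$(m+(m-1-j))" if "j < m" for j unfolding y_def using J_lo[OF x that] .
  have yhi: "y $ (m+j) = x$(m-1-j)" if "j < m" for j unfolding y_def using J_hi[OF x that] .
  have "H_tilde c m *\<^sub>v y = - (Jm m *\<^sub>v z)"
  proof (rule eq_vecI)
    fix i assume "i < dim_vec (- (Jm m *\<^sub>v z))"
    hence i: "i < 2*m" using J_carrier[of m] by simp
    show "(H_tilde c m *\<^sub>v y) $ i = (- (Jm m *\<^sub>v z)) $ i"
    proof (cases "i < m")
      case True
      obtain r where mr: "m = i + 1 + r" using True by (metis add.commute less_imp_Suc_add plus_1_eq_Suc add_Suc_right add.assoc)
      have R: "(- (Jm m *\<^sub>v z)) $ i = z $ (m + (m-1-i))" using True i J_lo[OF z True] carrier_matD[OF J_carrier[of m]] by simp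
      have kr: "m-1-i = r" "m-1-i < m" using mr by auto
      show ?thesis unfolding R Hv_top[OF y True] unfolding z_def Hv_bot[OF x kr(2)] unfolding kr(1)
        using mr ylo[of "i-1"] yhi[of "i-1"] ylo[of 0] yhi[of 0] ylo[of "i+1"] yhi[of "i+1"] ylo[of "m-1"] yhi[of "m-1"] ylo[of i] True
        by (cases i; cases r) (auto simp: algebra_simps)
    next
      case False
      define k where "k = i - m"
      have k: "k < m" and ik: "i = m + k" using i False unfolding k_def by auto
      obtain r where mr: "m = k + 1 + r" using k by (metis add.commute less_imp_Suc_add plus_1_eq_Suc add_Suc_right add.assoc)
      have R: "(- (Jm m *\<^sub>v z)) $ (m+k) = - z $ (m-1-k)" using k i J_hi[OF z k] carrier_matD[OF J_carrier[of m]] ik by simp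
      have kr: "m-1-k = r" "m-1-k < m" using mr by auto
      show ?thesis unfolding ik R Hv_bot[OF y k] unfolding z_def Hv_top[OF x kr(2)] unfolding kr(1)
        using mr ylo[of "k-1"] yhi[of "k-1"] ylo[of 0] yhi[of 0] ylo[of "k+1"] yhi[of "k+1"] ylo[of "m-1"] yhi[of "m-1"] yhi[of k] k
        by (cases k; cases r) (auto simp: algebra_simps)
    qed
  qed (use carrier_matD[OF J_carrier[of m]] carrier_matD[OF H_carrier[of c m]] in auto)
  then show ?thesis unfolding y_def z_def .
qed


lemma smult_one_vec: assumes x: "x \<in> carrier_vec n"
  shows "((a::real) \<cdot>\<^sub>m 1\<^sub>m n) *\<^sub>v x = a \<cdot>\<^sub>v x"
  by (rule eq_vecI) (use x in auto)

lemma plus_one_vec: assumes A: "A \<in> carrier_mat n n" and x: "x \<in> carrier_vec n"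
  shows "(A + (a::real) \<cdot>\<^sub>m 1\<^sub>m n) *\<^sub>v x = A *\<^sub>v x + a \<cdot>\<^sub>v x"
  using add_mult_distrib_mat_vec[OF A _ x, of "a \<cdot>\<^sub>m 1\<^sub>m n"] smult_one_vec[OF x] by simp

lemma JJ: assumes x: "x \<in> carrier_vec (2*m)" shows "Jm m *\<^sub>v (Jm m *\<^sub>v x) = - x"
proof -
  have y: "Jm m *\<^sub>v x \<in> carrier_vec (2*m)" using mult_mat_vec_carrier[OF J_carrier x] .
  show ?thesis
  proof (rule eq_vecI)
    fix i assume "i < dim_vec (-x)"
    hence i: "i < 2*m" using x by simp
    show "(Jm m *\<^sub>v (Jm m *\<^sub>v x)) $ i = (- x) $ i"
    proof (cases "i < m")
      case True
      have "m-1-i < m" using True by arith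
      from J_hi[OF x this] have "(Jm m *\<^sub>v x) $ (m + (m-1-i)) = x $ i" using True by simp
      then show ?thesis using J_lo[OF y True] True x i by simp
    next
      case False
      define k where "k = i - m"
      have k: "k < m" and ik: "i = m + k" using i False unfolding k_def by auto
      have "m-1-k < m" using k by arith
      from J_lo[OF x this] have "(Jm m *\<^sub>v x) $ (m-1-k) = - x $ (m + k)" using k by simp
      then show ?thesis using J_hi[OF y k] ik x i by simp
    qed
  qed (use x y carrier_matD[OF J_carrier[of m]] in auto)
qed

lemma detJ: "det (Jm m) \<noteq> 0"
proof -
  have "Jm m * Jm m = (-1) \<cdot>\<^sub>m 1\<^sub>m (2*m)"
  proof (rule mat_eq_vec[of _ "2*m"])
    fix x :: "real vec" assume x: "x \<in> carrier_vec (2*m)"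
    have nx: "- x = (-1) \<cdot>\<^sub>v x" by (rule eq_vecI) auto
    show "(Jm m * Jm m) *\<^sub>v x = ((-1) \<cdot>\<^sub>m 1\<^sub>m (2*m)) *\<^sub>v x"
      using nx JJ[OF x] smult_one_vec[OF x, of "-1"] assoc_mult_mat_vec[OF J_carrier J_carrier x] by simp
  qed (use J_carrier[of m] in auto)
  hence "det (Jm m) * det (Jm m) = det ((-1) \<cdot>\<^sub>m 1\<^sub>m (2*m))" using det_mult[OF J_carrier[of m] J_carrier[of m]] by simp
  also have "\<dots> = 1" by simp
  finally show ?thesis by auto
qed

lemma det_sym: "det (H_tilde c m + (-k) \<cdot>\<^sub>m 1\<^sub>m (2*m)) = det (H_tilde c m + k \<cdot>\<^sub>m 1\<^sub>m (2*m))"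
proof -
  let ?M1 = "H_tilde c m + (-k) \<cdot>\<^sub>m 1\<^sub>m (2*m)"
  let ?M2 = "H_tilde c m + k \<cdot>\<^sub>m 1\<^sub>m (2*m)"
  have M1: "?M1 \<in> carrier_mat (2*m) (2*m)" using H_carrier by simp
  have M2: "?M2 \<in> carrier_mat (2*m) (2*m)" using H_carrier by simp
  have eq: "Jm m * ?M1 = (-1) \<cdot>\<^sub>m (?M2 * Jm m)"
  proof (rule mat_eq_vec[of _ "2*m"])
    fix x :: "real vec" assume x: "x \<in> carrier_vec (2*m)"
    have Jx: "Jm m *\<^sub>v x \<in> carrier_vec (2*m)" using mult_mat_vec_carrier[OF J_carrier x] .
    have Hx: "H_tilde c m *\<^sub>v x \<in> carrier_vec (2*m)" using mult_mat_vec_carrier[OF H_carrier x] .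
    have "(Jm m * ?M1) *\<^sub>v x = Jm m *\<^sub>v (H_tilde c m *\<^sub>v x) + (-k) \<cdot>\<^sub>v (Jm m *\<^sub>v x)"
      using assoc_mult_mat_vec[OF J_carrier M1 x] plus_one_vec[OF H_carrier x]
        mult_add_distrib_mat_vec[OF J_carrier Hx, of "(-k) \<cdot>\<^sub>v x"] mult_mat_vec[OF J_carrier x] x by simp
    moreover have "((-1) \<cdot>\<^sub>m (?M2 * Jm m)) *\<^sub>v x = (-1) \<cdot>\<^sub>v (H_tilde c m *\<^sub>v (Jm m *\<^sub>v x) + k \<cdot>\<^sub>v (Jm m *\<^sub>v x))"
    proof -
      have "((-1) \<cdot>\<^sub>m (?M2 * Jm m)) *\<^sub>v x = (-1) \<cdot>\<^sub>v ((?M2 * Jm m) *\<^sub>v x)"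
        by (rule eq_vecI) (use M2 J_carrier[of m] x in auto)
      then show ?thesis using assoc_mult_mat_vec[OF M2 J_carrier x] plus_one_vec[OF H_carrier Jx] by simp
    qed
    moreover have "Jm m *\<^sub>v (H_tilde c m *\<^sub>v x) + (-k) \<cdot>\<^sub>v (Jm m *\<^sub>v x) = (-1) \<cdot>\<^sub>v (H_tilde c m *\<^sub>v (Jm m *\<^sub>v x) + k \<cdot>\<^sub>v (Jm m *\<^sub>v x))"
      unfolding JHJ[OF x] by (rule eq_vecI) (use Jx mult_mat_vec_carrier[OF J_carrier Hx] in auto)
    ultimately show "(Jm m * ?M1) *\<^sub>v x = ((-1) \<cdot>\<^sub>m (?M2 * Jm m)) *\<^sub>v x" by simp
  qed (use J_carrier[of m] M1 M2 in auto)
  have "det (Jm m) * det ?M1 = det ((-1) \<cdot>\<^sub>m (?M2 * Jm m))" using det_mult[OF J_carrier M1] eq by simp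
  also have "\<dots> = det ?M2 * det (Jm m)" using det_mult[OF M2 J_carrier] M2 J_carrier[of m] by simp
  finally show ?thesis using detJ[of m] by simp
qed


lemma pcompose_power_left: "pcompose (q ^ n) r = (pcompose q r) ^ n"
  by (induction n) (simp_all add: pcompose_mult pcompose_1)

lemma order_even:
  fixes p :: "real poly"
  assumes p0: "p \<noteq> 0" and ev: "\<And>x. poly p (-x) = poly p x"
  shows "order a p = order (-a) p"
proof -
  have pc: "pcompose p [:0,-1:] = p"
    by (rule poly_ext) (simp add: poly_pcompose ev)
  have key: "[:b,1:]^n dvd p" if d: "[:-b,1:]^n dvd p" for b n
  proof -
    obtain q where pq: "p = [:-b,1:]^n * q" using d by (elim dvdE)
    have "p = pcompose ([:-b,1:]^n * q) [:0,-1:]" using pc pq by simp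
    also have "\<dots> = (pcompose [:-b,1:] [:0,-1:])^n * pcompose q [:0,-1:]"
      by (simp add: pcompose_mult pcompose_power_left)
    also have "\<dots> = [:b,1:]^n * Polynomial.smult ((-1)^n) (pcompose q [:0,-1:])"
    proof -
      have h: "pcompose [:-b,1:] [:0,-1:] = Polynomial.smult (-1) [:b,1:]"
        by (simp add: pcompose_pCons)
      show ?thesis unfolding h smult_power by (simp only: mult_smult_left mult_smult_right)
    qed
    finally show ?thesis by (rule dvdI)
  qed
  have "order a p \<le> order (-a) p"
  proof -
    have "[:-a,1:]^(order a p) dvd p" by (rule order_1)
    hence "[:-(-a),1:]^(order a p) dvd p" using key by simp
    thus ?thesis using p0 order_divides by blast
  qed
  moreover have "order (-a) p \<le> order a p"
  proof -
    have "[:-(-a),1:]^(order (-a) p) dvd p" by (rule order_1)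
    hence "[:-a,1:]^(order (-a) p) dvd p" using key[of "-a"] by simp
    thus ?thesis using p0 order_divides by blast
  qed
  ultimately show ?thesis by simp
qed

lemma det_neg_even: assumes M: "M \<in> carrier_mat (2*m) (2*m)" shows "det (- M) = det (M :: real mat)"
proof -
  have "- M = (-1) \<cdot>\<^sub>m M" by (rule eq_matI) (use M in auto)
  then show ?thesis using M by simp
qed

lemma part1: "order l (char_poly (H_tilde c m)) = order (- l) (char_poly (H_tilde c m))"
proof (rule order_even)
  show "char_poly (H_tilde c m) \<noteq> 0"
    using degree_monic_char_poly[OF H_carrier[of c m]] by auto
  fix k :: real
  have d: "dim_row (H_tilde c m) = 2*m" using H_carrier[of c m] by auto
  have M1: "H_tilde c m + (-k) \<cdot>\<^sub>m 1\<^sub>m (2*m) \<in> carrier_mat (2*m) (2*m)" using H_carrier by simp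
  have M2: "H_tilde c m + k \<cdot>\<^sub>m 1\<^sub>m (2*m) \<in> carrier_mat (2*m) (2*m)" using H_carrier by simp
  have "poly (char_poly (H_tilde c m)) k = det (H_tilde c m + (-k) \<cdot>\<^sub>m 1\<^sub>m (2*m))"
    unfolding char_poly_matrix[OF H_carrier] char_matrix_def d using det_neg_even[OF M1] by simp
  moreover have "poly (char_poly (H_tilde c m)) (-k) = det (H_tilde c m + k \<cdot>\<^sub>m 1\<^sub>m (2*m))"
    unfolding char_poly_matrix[OF H_carrier] char_matrix_def d using det_neg_even[OF M2] by simp
  ultimately show "poly (char_poly (H_tilde c m)) (-k) = poly (char_poly (H_tilde c m)) k"
    using det_sym[of c m k] by simp
qed

lemma part2: assumes c: "c \<ge> 0" and l: "l \<in> spec (H_tilde c m)"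
  shows "2 * \<bar>c - 1\<bar> \<le> \<bar>l\<bar>"
proof -
  have d: "dim_row (H_tilde c m) = 2*m" using H_carrier[of c m] by auto
  from l obtain x where "eigenvector (H_tilde c m) x l" unfolding spec_def eigenvalue_def by auto
  hence x: "x \<in> carrier_vec (2*m)" "x \<noteq> 0\<^sub>v (2*m)" "H_tilde c m *\<^sub>v x = l \<cdot>\<^sub>v x"
    unfolding eigenvector_def d by auto
  show ?thesis using gap[OF c x] .
qed

lemma one_minus_cos: "1 - cos t \<le> t^2 / (2::real)"
proof -
  have "cos t = 1 - 2 * sin (t/2) ^ 2" using cos_double_sin[of "t/2"] by simp
  moreover have "sin (t/2) ^ 2 \<le> (t/2)^2"
  proof -
    have "\<bar>sin (t/2)\<bar> \<le> \<bar>t/2\<bar>" by (rule abs_sin_x_le_abs_x)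
    hence "\<bar>sin (t/2)\<bar>^2 \<le> \<bar>t/2\<bar>^2" by (rule power_mono) simp
    thus ?thesis by (simp only: power2_abs)
  qed
  ultimately show ?thesis by (simp add: power_divide)
qed

lemma part3: assumes c: "c \<ge> 0" and e: "\<epsilon> > 0"
  shows "\<exists>m. {-2 * \<bar>c - 1\<bar> - \<epsilon> <..< 2 * \<bar>c - 1\<bar> + \<epsilon>} \<inter> spec (H_tilde c m) \<noteq> {}"
proof (cases "c = 0")
  case True
  define x :: "real vec" where "x = vec 2 (\<lambda>_. 1)"
  have xc: "x \<in> carrier_vec (2*1)" unfolding x_def by simp
  have ev: "H_tilde c 1 *\<^sub>v x = 2 \<cdot>\<^sub>v x"
  proof (rule eq_vecI)
    fix i assume "i < dim_vec (2 \<cdot>\<^sub>v x)"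
    hence i: "i < 2" unfolding x_def by simp
    show "(H_tilde c 1 *\<^sub>v x) $ i = (2 \<cdot>\<^sub>v x) $ i"
    proof (cases "i = 0")
      case True
      then show ?thesis using Hv_top[OF xc, of 0 c] \<open>c = 0\<close> unfolding x_def by simp
    next
      case False
      hence "i = 1 + 0" using i by simp
      then show ?thesis using Hv_bot[OF xc, of 0 c] \<open>c = 0\<close> unfolding x_def by simp
    qed
  qed (use H_carrier[of c 1] x_def in auto)
  have "x \<noteq> 0\<^sub>v (2*1)" unfolding x_def by (metis index_vec index_zero_vec(1) one_neq_zero pos2 mult_1_right)
  hence "2 \<in> spec (H_tilde c 1)" unfolding spec_def eigenvalue_def eigenvector_def
    using xc ev carrier_matD[OF H_carrier[of c 1]] by auto
  moreover have "2 \<in> {-2 * \<bar>c - 1\<bar> - \<epsilon> <..< 2 * \<bar>c - 1\<bar> + \<epsilon>}" using True e by simp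
  ultimately show ?thesis by blast
next
  case False
  hence c0: "c > 0" using c by simp
  obtain n :: nat where n: "16 * c / \<epsilon>^2 < real n" using reals_Archimedean2 by blast
  define m where "m = Suc n"
  have m0: "m > 0" unfolding m_def by simp
  have mn: "16 * c / \<epsilon>^2 < real m" using n unfolding m_def by simp
  define t where "t = pi / (2 * real m)"
  define \<phi> where "\<phi> = pi - t"
  define \<mu> where "\<mu> = sqrt (1 + c^2 + 2*c*cos \<phi>)"
  have ev: "eigenvalue (H_tilde c m) (2*\<mu>)" using eig_construct[OF c0 m0] unfolding \<mu>_def \<phi>_def t_def .
  have rad: "1 + c^2 + 2*c*cos \<phi> = (c - 1)^2 + 2*c*(1 - cos t)" unfolding \<phi>_def by (simp add: power2_eq_square algebra_simps)
  have cos_t: "1 - cos t \<le> t^2/2" by (rule one_minus_cos)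
  have t_le: "t \<le> 2 / real m" unfolding t_def using m0 pi_less_4 by (simp add: field_simps)
  have t0: "t \<ge> 0" unfolding t_def by simp
  have "t^2 \<le> (2 / real m)^2" using t_le t0 by (rule power_mono)
  also have "\<dots> \<le> 4 / real m" using m0 by (simp add: power2_eq_square field_simps)
  finally have t2: "t^2 \<le> 4 / real m" .
  have "2*c*(1 - cos t) \<ge> 0" using c cos_le_one[of t] by simp
  hence radnn: "1 + c^2 + 2*c*cos \<phi> \<ge> 0" using rad by (smt (verit) zero_le_power2)
  have mu2: "\<mu>^2 = 1 + c^2 + 2*c*cos \<phi>" unfolding \<mu>_def using radnn by simp
  have mu0: "\<mu> \<ge> 0" unfolding \<mu>_def using radnn by simp
  have ct2: "2*(1 - cos t) \<le> t^2" using cos_t by simp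
  have h: "2*c*(1 - cos t) \<le> c * t^2" using mult_left_mono[OF ct2 c] by (simp add: algebra_simps)
  have sq: "(2*\<mu>)^2 = 4*\<mu>^2" by (simp add: power_mult_distrib)
  have "(2*\<mu>)^2 \<le> 4 * (c-1)^2 + 4 * (c * t^2)"
    unfolding sq using mu2 rad h by linarith
  also have "\<dots> \<le> 4 * (c-1)^2 + 16 * c / real m"
  proof -
    have "c * t^2 \<le> c * (4 / real m)" by (rule mult_left_mono[OF t2 c])
    thus ?thesis by simp
  qed
  also have "\<dots> < 4 * (c-1)^2 + \<epsilon>^2"
  proof -
    have "16 * c < \<epsilon>^2 * real m" using mn e by (simp add: field_simps)
    hence "16 * c / real m < \<epsilon>^2" using m0 by (simp add: field_simps)
    thus ?thesis by simp
  qed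
  also have "\<dots> \<le> (2 * \<bar>c - 1\<bar> + \<epsilon>)^2" using e by (simp add: power2_eq_square algebra_simps)
  finally have "(2*\<mu>)^2 < (2 * \<bar>c - 1\<bar> + \<epsilon>)^2" .
  hence lt: "2*\<mu> < 2 * \<bar>c - 1\<bar> + \<epsilon>" using e by (smt (verit) power_mono)
  have gt: "-2 * \<bar>c - 1\<bar> - \<epsilon> < 2*\<mu>" using mu0 e abs_ge_zero[of "c-1"] by (smt (verit))
  have "2*\<mu> \<in> spec (H_tilde c m)" using ev unfolding spec_def by simp
  hence "2*\<mu> \<in> {-2 * \<bar>c - 1\<bar> - \<epsilon> <..< 2 * \<bar>c - 1\<bar> + \<epsilon>} \<inter> spec (H_tilde c m)" using lt gt by simp
  then show ?thesis by blast
qed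

theorem theorem6p2:
  fixes c :: real
  assumes "c \<ge> 0"
  shows "(\<forall>m. \<forall>l::real. order l (char_poly (H_tilde c m)) = order (- l) (char_poly (H_tilde c m)))
       \<and> (\<forall>m. {-2 * \<bar>c - 1\<bar> <..< 2 * \<bar>c - 1\<bar>} \<inter> spec (H_tilde c m) = {})
       \<and> (\<forall>\<epsilon>>0. \<exists>m. {-2 * \<bar>c - 1\<bar> - \<epsilon> <..< 2 * \<bar>c - 1\<bar> + \<epsilon>} \<inter> spec (H_tilde c m) \<noteq> {})"
proof (intro conjI allI impI)
  fix m l show "order l (char_poly (H_tilde c m)) = order (- l) (char_poly (H_tilde c m))" by (rule part1)
next
  fix m
  show "{-2 * \<bar>c - 1\<bar> <..< 2 * \<bar>c - 1\<bar>} \<inter> spec (H_tilde c m) = {}"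
    using part2[OF assms, of _ m] by fastforce
next
  fix \<epsilon> :: real assume "\<epsilon> > 0"
  then show "\<exists>m. {-2 * \<bar>c - 1\<bar> - \<epsilon> <..< 2 * \<bar>c - 1\<bar> + \<epsilon>} \<inter> spec (H_tilde c m) \<noteq> {}"
    by (rule part3[OF assms])
qed


end
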